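(* Let $X=(\vec x_i)_{i\ge1}$ be a sequence of nonzero points in $[0,1]^k$ and let $B\ge2$ be a constant. Define $\vec v_i:=B^{2^i}\vec x_i/\|\vec x_i\|_1$ for each $i$, and let $\mathcal{D}$ be the distribution that outputs $\vec v_i$ with probability $1/B^{2^i}$ for each $i$ and outputs $\vec 0$ with the remaining probability $1-\sum_{i\ge1}B^{-2^i}$. Then $\mathrm{ARev}(\mathcal{D})\le\mathrm{AlignGap}(X)+1/B$.
   Context: A mechanism $M$ is a set of options $(\vec q,p)$ with $\vec q\in[0,1]^k$, $p\in\mathbb{R}$, always containing the null option $(\vec 0,0)$; a buyer with values $\vec v\in\mathbb{R}^k_{\ge0}$ selects an option maximizing $\vec v\cdot\vec q-p$ (ties broken arbitrarily; a maximizer is assumed to exist), and $\vec q^M(\vec v),p^M(\vec v)$ denote the allocation and price of the selected option. $\mathrm{ARev}(\mathcal{D},M):=\mathbb{E}_{\vec v\sim\mathcal{D}}[p^M(\vec v)\cdot\mathbf 1(\vec v\text{ is parallel to }\vec q^M(\vec v))]$, $\mathrm{ARev}(\mathcal{D}):=\sup_M\mathrm{ARev}(\mathcal{D},M)$. AlignGap: For $X=(\vec x_i)_{i=1}^N$ a sequence of nonzero points in $[0,1]^k$, let $C=(c_i)_{i=0}^N$ be a sequence of reals with $c_0=0$ and $c_i\in[0,1/\|\vec x_i\|_\infty]$ for $i\ge1$; set $\vec x_0:=\vec 0$. Define $\mathrm{sgap}_i^{X,C}:=\min_{0\le j<i}\vec x_i\cdot(c_i\vec x_i-c_j\vec x_j)$,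 $\mathrm{AlignGap}(X,C):=\sum_{i=1}^N \max\{0,\mathrm{sgap}_i^{X,C}\}/\|\vec x_i\|_1$, and $\mathrm{AlignGap}(X):=\sup_C\mathrm{AlignGap}(X,C)$. *)

theory Defs
  imports "HOL-Analysis.Analysis"
begin

text \<open>Vectors in R^k are modelled as real^'k (k = CARD('k), arbitrary but fixed).\<close>

definition norm1 :: "real^'k \<Rightarrow> real" where
  "norm1 x = (\<Sum>i\<in>UNIV. \<bar>x $ i\<bar>)"

definition norminf :: "real^'k \<Rightarrow> real" where
  "norminf x = Max (range (\<lambda>i. \<bar>x $ i\<bar>))"

definition in_unit_cube :: "real^'k \<Rightarrow> bool" where
  "in_unit_cube q \<longleftrightarrow> (\<forall>i. 0 \<le> q $ i \<and> q $ i \<le> 1)"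

definition parallel :: "real^'k \<Rightarrow> real^'k \<Rightarrow> bool" where
  "parallel u w \<longleftrightarrow> (\<exists>t. u = t *\<^sub>R w) \<or> (\<exists>t. w = t *\<^sub>R u)"

definition mechanism :: "((real^'k) \<times> real) set \<Rightarrow> bool" where
  "mechanism M \<longleftrightarrow> (\<forall>(q,p)\<in>M. in_unit_cube q) \<and> (0, 0) \<in> M"

definition utility :: "real^'k \<Rightarrow> (real^'k) \<times> real \<Rightarrow> real" where
  "utility v o' = v \<bullet> fst o' - snd o'"

text \<open>sel is a (arbitrary) tie-breaking rule: on every value vector in S it picks a
  utility-maximizing option of M.\<close>
definition selects :: "((real^'k) \<times> real) set \<Rightarrow> (real^'k \<Rightarrow> (real^'k) \<times> real) \<Rightarrow> (real^'k) set \<Rightarrow> bool" where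
  "selects M sel S \<longleftrightarrow>
     (\<forall>v\<in>S. sel v \<in> M \<and> (\<forall>o'\<in>M. utility v o' \<le> utility v (sel v)))"

definition aligned_rev :: "(real^'k \<Rightarrow> (real^'k) \<times> real) \<Rightarrow> real^'k \<Rightarrow> real" where
  "aligned_rev sel v = (if parallel v (fst (sel v)) then snd (sel v) else 0)"

definition vpt :: "real \<Rightarrow> (nat \<Rightarrow> real^'k) \<Rightarrow> nat \<Rightarrow> real^'k" where
  "vpt B X i = (B ^ (2 ^ i) / norm1 (X i)) *\<^sub>R X i"

definition supportD :: "real \<Rightarrow> (nat \<Rightarrow> real^'k) \<Rightarrow> (real^'k) set" where
  "supportD B X = insert 0 {vpt B X i | i. i \<ge> 1}"

text \<open>Expectation of the aligned revenue under D: v_i (i >= 1) has probability 1/B^(2^i),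
  the point 0 has the remaining probability. Taken in the extended reals.\<close>
definition ARevD :: "real \<Rightarrow> (nat \<Rightarrow> real^'k) \<Rightarrow> (real^'k \<Rightarrow> (real^'k) \<times> real) \<Rightarrow> ereal" where
  "ARevD B X sel =
     (\<Sum>i. ereal (aligned_rev sel (vpt B X (Suc i)) / B ^ (2 ^ Suc i)))
     + ereal ((1 - (\<Sum>i. 1 / B ^ (2 ^ Suc i))) * aligned_rev sel 0)"

definition ARev_sup :: "real \<Rightarrow> (nat \<Rightarrow> real^'k) \<Rightarrow> ereal" where
  "ARev_sup B X = (SUP (M, sel) \<in> {(M, sel). mechanism M \<and> selects M sel (supportD B X)}.
                      ARevD B X sel)"

definition x0 :: "(nat \<Rightarrow> real^'k) \<Rightarrow> nat \<Rightarrow> real^'k" where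
  "x0 X i = (if i = 0 then 0 else X i)"

definition valid_C :: "(nat \<Rightarrow> real^'k) \<Rightarrow> (nat \<Rightarrow> real) \<Rightarrow> bool" where
  "valid_C X c \<longleftrightarrow> c 0 = 0 \<and> (\<forall>i\<ge>1. 0 \<le> c i \<and> c i \<le> 1 / norminf (X i))"

definition sgap :: "(nat \<Rightarrow> real^'k) \<Rightarrow> (nat \<Rightarrow> real) \<Rightarrow> nat \<Rightarrow> real" where
  "sgap X c i = Min ((\<lambda>j. x0 X i \<bullet> (c i *\<^sub>R x0 X i - c j *\<^sub>R x0 X j)) ` {..<i})"

definition AlignGapC :: "(nat \<Rightarrow> real^'k) \<Rightarrow> (nat \<Rightarrow> real) \<Rightarrow> ereal" where
  "AlignGapC X c = (\<Sum>i. ereal (max 0 (sgap X c (Suc i)) / norm1 (X (Suc i))))"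

definition AlignGap :: "(nat \<Rightarrow> real^'k) \<Rightarrow> ereal" where
  "AlignGap X = (SUP c \<in> {c. valid_C X c}. AlignGapC X c)"

end

theory Submission imports Defs begin
lemma inner_nonneg_cube:
  fixes v q :: "real^'k"
  assumes "in_unit_cube q" "\<And>k. 0 \<le> v $ k"
  shows "0 \<le> v \<bullet> q"
  using assms unfolding in_unit_cube_def inner_vec_def
  by (auto intro!: sum_nonneg)

lemma inner_le_cube:
  fixes v q :: "real^'k"
  assumes "in_unit_cube q" "\<And>k. 0 \<le> v $ k"
  shows "v \<bullet> q \<le> (\<Sum>k\<in>UNIV. v $ k)"
  unfolding inner_vec_def
proof (rule sum_mono)
  fix k show "v $ k \<bullet> q $ k \<le> v $ k"
    using assms unfolding in_unit_cube_def by (simp add: mult_left_le)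
qed

lemma norm1_pos:
  fixes x :: "real^'k"
  assumes "x \<noteq> 0" shows "0 < norm1 x"
proof -
  obtain k where "x $ k \<noteq> 0" using assms by (metis vec_eq_iff zero_index)
  hence "0 < \<bar>x $ k\<bar>" by simp
  also have "\<dots> \<le> norm1 x" unfolding norm1_def
    by (rule member_le_sum) auto
  finally show ?thesis .
qed

lemma norm1_cube:
  fixes x :: "real^'k"
  assumes "in_unit_cube x" shows "norm1 x = (\<Sum>k\<in>UNIV. x $ k)"
  using assms unfolding norm1_def in_unit_cube_def by simp

lemma norminf_attained:
  fixes x :: "real^'k"
  assumes "x \<noteq> 0" "in_unit_cube x"
  shows "\<exists>k. norminf x = x $ k \<and> 0 < x $ k"
proof -
  have fin: "finite (range (\<lambda>i. \<bar>x $ i\<bar>))" by simp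
  have "Max (range (\<lambda>i. \<bar>x $ i\<bar>)) \<in> range (\<lambda>i. \<bar>x $ i\<bar>)"
    by (rule Max_in[OF fin]) auto
  then obtain k where "Max (range (\<lambda>i. \<bar>x $ i\<bar>)) = \<bar>x $ k\<bar>" by blast
  hence k: "norminf x = \<bar>x $ k\<bar>" unfolding norminf_def .
  have ge: "\<And>i. \<bar>x $ i\<bar> \<le> \<bar>x $ k\<bar>"
    using k unfolding norminf_def by (metis Max_ge fin rangeI)
  obtain j where "x $ j \<noteq> 0" using assms by (metis vec_eq_iff zero_index)
  hence "0 < \<bar>x $ k\<bar>" using ge[of j] by simp
  moreover have "0 \<le> x $ k" using assms(2) unfolding in_unit_cube_def by auto
  ultimately show ?thesis using k by auto
qed

lemma parallel_cube:
  fixes x q :: "real^'k"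
  assumes "x \<noteq> 0" "in_unit_cube x" "in_unit_cube q" "0 < s"
    and "parallel (s *\<^sub>R x) q"
  shows "\<exists>c. q = c *\<^sub>R x \<and> 0 \<le> c \<and> c \<le> 1 / norminf x"
proof -
  have "\<exists>c. q = c *\<^sub>R x"
  proof (cases "\<exists>t. s *\<^sub>R x = t *\<^sub>R q")
    case True
    then obtain t where t: "s *\<^sub>R x = t *\<^sub>R q" by blast
    have "t \<noteq> 0" using t assms by auto
    have "q = (1/t) *\<^sub>R (t *\<^sub>R q)" using \<open>t \<noteq> 0\<close> by simp
    also have "\<dots> = (s / t) *\<^sub>R x" by (simp flip: t add: divide_inverse mult.commute)
    finally have "q = (s / t) *\<^sub>R x" .
    thus ?thesis by blast
  next
    case False
    then obtain t where "q = t *\<^sub>R (s *\<^sub>R x)" using assms(5) unfolding parallel_def by blast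
    thus ?thesis by auto
  qed
  then obtain c where c: "q = c *\<^sub>R x" by blast
  obtain k where k: "norminf x = x $ k" "0 < x $ k" using norminf_attained assms by blast
  have "0 \<le> q $ k" "q $ k \<le> 1" using assms(3) unfolding in_unit_cube_def by auto
  hence "0 \<le> c * x $ k" "c * x $ k \<le> 1" using c by auto
  hence "0 \<le> c" "c \<le> 1 / x $ k" using k(2)
    by (auto simp: field_simps zero_le_mult_iff)
  thus ?thesis using c k by auto
qed

lemma pow_bound:
  fixes B :: real assumes "B \<ge> 2"
  shows "1 / B ^ (2 ^ m) \<le> (1 / B^2) ^ m"
proof -
  have "2 * m \<le> 2 ^ m"
  proof (induction m)
    case (Suc m) thus ?case
      by (cases m) auto
  qed simp
  hence "B ^ (2 * m) \<le> B ^ (2 ^ m)" using assms by (intro power_increasing) auto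
  hence "(B^2)^m \<le> B ^ (2 ^ m)" by (simp add: power_mult)
  moreover have "0 < (B^2)^m" using assms by simp
  ultimately show ?thesis by (simp add: power_divide frac_le)
qed

lemma main_bound:
  fixes X :: "nat \<Rightarrow> real^'k" and B :: real
  assumes X: "\<forall>i\<ge>1. X i \<noteq> 0 \<and> in_unit_cube (X i)"
    and B: "B \<ge> 2"
    and M: "mechanism M" and S: "selects M sel (supportD B X)"
  shows "ARevD B X sel \<le> AlignGap X + ereal (1 / B)"
proof -
  define v where "v i = vpt B X i" for i
  define q where "q i = fst (sel (v i))" for i
  define p where "p i = snd (sel (v i))" for i
  define s where "s i = B ^ (2 ^ i) / norm1 (X i)" for i
  define al where "al i = parallel (v i) (q i)" for i
  define c where "c i = (if i = 0 then 0 else if al i then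
      (SOME c. q i = c *\<^sub>R X i \<and> 0 \<le> c \<and> c \<le> 1 / norminf (X i)) else 0)" for i
  define bb where "bb j = (if j = 0 then 0 else B ^ (2 ^ j))" for j :: nat
  have Bpos: "0 < B" using B by simp
  have spos: "0 < s i" if "i \<ge> 1" for i
    using X that norm1_pos[of "X i"] Bpos unfolding s_def by (simp add: divide_pos_pos)
  have vs: "v i = s i *\<^sub>R X i" for i unfolding v_def vpt_def s_def by simp
  have vsup: "v i \<in> supportD B X" if "i \<ge> 1" for i
    unfolding v_def supportD_def using that by auto
  have selM: "sel (v i) \<in> M" and IC: "\<And>o'. o' \<in> M \<Longrightarrow> utility (v i) o' \<le> utility (v i) (sel (v i))"
    if "i \<ge> 1" for i using S vsup[OF that] unfolding selects_def by auto
  have qcube: "in_unit_cube (q i)" if "i \<ge> 1" for i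
    using M selM[OF that] unfolding mechanism_def q_def by (metis case_prod_beta)
  have vnn: "0 \<le> v i $ k" if "i \<ge> 1" for i k
    using X that spos[OF that] unfolding vs in_unit_cube_def by auto
  have vsum: "(\<Sum>k\<in>UNIV. v i $ k) = B ^ (2 ^ i)" if "i \<ge> 1" for i
  proof -
    have "(\<Sum>k\<in>UNIV. v i $ k) = s i * norm1 (X i)"
      using norm1_cube[of "X i"] X that unfolding vs by (simp add: sum_distrib_left)
    also have "\<dots> = B ^ (2 ^ i)" using norm1_pos[of "X i"] X that unfolding s_def by auto
    finally show ?thesis .
  qed
  have null: "(0, 0) \<in> M" using M unfolding mechanism_def by auto
  have ple: "p i \<le> v i \<bullet> q i" if "i \<ge> 1" for i
    using IC[OF that null] unfolding utility_def p_def q_def by simp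
  have pB: "p i \<le> B ^ (2 ^ i)" if "i \<ge> 1" for i
    using ple[OF that] inner_le_cube[OF qcube[OF that] vnn[OF that]] vsum[OF that] by simp
  have cprop: "q i = c i *\<^sub>R X i \<and> 0 \<le> c i \<and> c i \<le> 1 / norminf (X i)"
    if "i \<ge> 1" "al i" for i
  proof -
    have "\<exists>c. q i = c *\<^sub>R X i \<and> 0 \<le> c \<and> c \<le> 1 / norminf (X i)"
      using parallel_cube[of "X i" "q i" "s i"] X that qcube spos al_def vs by auto
    hence "q i = (SOME c. q i = c *\<^sub>R X i \<and> 0 \<le> c \<and> c \<le> 1 / norminf (X i)) *\<^sub>R X i \<and>
      0 \<le> (SOME c. q i = c *\<^sub>R X i \<and> 0 \<le> c \<and> c \<le> 1 / norminf (X i)) \<and>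
      (SOME c. q i = c *\<^sub>R X i \<and> 0 \<le> c \<and> c \<le> 1 / norminf (X i)) \<le> 1 / norminf (X i)"
      by (rule someI_ex)
    thus ?thesis unfolding c_def using that by simp
  qed
  have validC: "valid_C X c"
    unfolding valid_C_def
  proof (intro conjI allI impI)
    show "c 0 = 0" unfolding c_def by simp
    fix i :: nat assume i: "i \<ge> 1"
    show "0 \<le> c i" using cprop[OF i] unfolding c_def by auto
    have "0 < norminf (X i)" using norminf_attained[of "X i"] X i by auto
    thus "c i \<le> 1 / norminf (X i)" using cprop[OF i] unfolding c_def by auto
  qed
  have key: "aligned_rev sel (v i) \<le> s i * max 0 (sgap X c i) + bb (i - 1)" if i: "i \<ge> 1" for i
  proof (cases "al i")
    case False
    hence "aligned_rev sel (v i) = 0" unfolding aligned_rev_def al_def q_def by simp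
    moreover have "0 \<le> s i * max 0 (sgap X c i)" using spos[OF i] by simp
    moreover have "0 \<le> bb (i - 1)" unfolding bb_def using Bpos by simp
    ultimately show ?thesis by linarith
  next
    case True
    have ar: "aligned_rev sel (v i) = p i" using True unfolding aligned_rev_def al_def q_def p_def by simp
    have qi: "q i = c i *\<^sub>R X i" using cprop[OF i True] by simp
    have vqi: "v i \<bullet> q i = s i * (c i * (X i \<bullet> X i))" unfolding vs qi by simp
    have "\<forall>j\<in>{..<i}. (p i - bb (i - 1)) / s i \<le> x0 X i \<bullet> (c i *\<^sub>R x0 X i - c j *\<^sub>R x0 X j)"
    proof
      fix j assume "j \<in> {..<i}"
      hence j: "j < i" by simp
      have "p i - bb (i - 1) \<le> s i * (x0 X i \<bullet> (c i *\<^sub>R x0 X i - c j *\<^sub>R x0 X j))"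
      proof (cases "j = 0")
        case True
        have "0 \<le> bb (i - 1)" unfolding bb_def using Bpos by simp
        thus ?thesis using ple[OF i] vqi True i unfolding x0_def c_def
          by (simp add: inner_diff_right)
      next
        case False
        hence j1: "j \<ge> 1" by simp
        have bbj: "p j \<le> bb (i - 1)"
        proof -
          have "p j \<le> B ^ (2 ^ j)" by (rule pB[OF j1])
          also have "\<dots> \<le> B ^ (2 ^ (i - 1))"
            using B j by (intro power_increasing) auto
          finally show ?thesis unfolding bb_def using j j1 by auto
        qed
        have ic: "v i \<bullet> q j - p j \<le> v i \<bullet> q i - p i"
          using IC[OF i selM[OF j1]] unfolding utility_def p_def q_def by simp
        have vqj: "s i * (c j * (X i \<bullet> X j)) \<le> v i \<bullet> q j"
        proof (cases "al j")
          case True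
          thus ?thesis using cprop[OF j1 True] unfolding vs by simp
        next
          case False
          hence "c j = 0" unfolding c_def by simp
          thus ?thesis using inner_nonneg_cube[OF qcube[OF j1] vnn[OF i]] by simp
        qed
        have "x0 X i \<bullet> (c i *\<^sub>R x0 X i - c j *\<^sub>R x0 X j) = c i * (X i \<bullet> X i) - c j * (X i \<bullet> X j)"
          unfolding x0_def using i j1 by (simp add: inner_diff_right)
        hence "s i * (x0 X i \<bullet> (c i *\<^sub>R x0 X i - c j *\<^sub>R x0 X j)) = v i \<bullet> q i - s i * (c j * (X i \<bullet> X j))"
          using vqi by (simp add: right_diff_distrib)
        thus ?thesis using ic vqj bbj by linarith
      qed
      thus "(p i - bb (i - 1)) / s i \<le> x0 X i \<bullet> (c i *\<^sub>R x0 X i - c j *\<^sub>R x0 X j)"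
        using spos[OF i] by (simp add: divide_le_eq mult.commute)
    qed
    hence "(p i - bb (i - 1)) / s i \<le> sgap X c i" unfolding sgap_def
      using i by (intro Min.boundedI) (auto simp: lessThan_empty_iff)
    hence "p i - bb (i - 1) \<le> s i * sgap X c i" using spos[OF i] by (simp add: divide_le_eq mult.commute)
    moreover have "s i * sgap X c i \<le> s i * max 0 (sgap X c i)" using spos[OF i] by (intro mult_left_mono) auto
    ultimately show ?thesis using ar by linarith
  qed
  define K where "K = \<bar>p 1\<bar> + \<bar>v 1 \<bullet> q 1\<bar>"
  have K0: "0 \<le> K" unfolding K_def by simp
  have low: "- K \<le> aligned_rev sel (v i)" if i: "i \<ge> 1" for i
  proof (cases "al i")
    case False
    hence "aligned_rev sel (v i) = 0" unfolding aligned_rev_def al_def q_def by simp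
    thus ?thesis using K0 by simp
  next
    case True
    have ar: "aligned_rev sel (v i) = p i" using True unfolding aligned_rev_def al_def q_def p_def by simp
    have ic: "v 1 \<bullet> q i - p i \<le> v 1 \<bullet> q 1 - p 1"
      using IC[of 1, OF _ selM[OF i]] unfolding utility_def p_def q_def by simp
    have "0 \<le> v 1 \<bullet> q i" using inner_nonneg_cube[OF qcube[OF i] vnn[of 1]] by simp
    thus ?thesis using ic ar unfolding K_def by linarith
  qed
  define r where "r = 1 / B^2"
  have B4: "4 \<le> B * B" using mult_mono[of 2 B 2 B] B by simp
  have r0: "0 < r" and r1: "r \<le> 1/4" using B B4 unfolding r_def
    by (auto simp: field_simps power2_eq_square)
  have rpow: "1 / B ^ (2 ^ m) \<le> r ^ m" for m using pow_bound[OF B] unfolding r_def .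
  define a where "a n = aligned_rev sel (v (Suc n)) / B ^ (2 ^ Suc n)" for n
  define g where "g n = max 0 (sgap X c (Suc n)) / norm1 (X (Suc n))" for n
  define e where "e n = bb n / B ^ (2 ^ Suc n)" for n
  define h where "h n = r ^ n - (if n = 0 then 1 else 0)" for n
  have Bp: "0 < B ^ (2 ^ n)" for n using Bpos by simp
  have g0: "0 \<le> g n" for n
    unfolding g_def using norm1_pos[of "X (Suc n)"] X by simp
  have aup: "a n \<le> g n + e n" for n
  proof -
    have "a n \<le> (s (Suc n) * max 0 (sgap X c (Suc n)) + bb n) / B ^ (2 ^ Suc n)"
      unfolding a_def using key[of "Suc n"] Bp[of "Suc n"] by (simp add: divide_right_mono)
    also have "\<dots> = g n + e n" unfolding g_def e_def s_def using Bp[of "Suc n"] Bpos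
      by (simp add: add_divide_distrib)
    finally show ?thesis .
  qed
  have alow: "- K * r ^ Suc n \<le> a n" for n
  proof -
    have "- K * r ^ Suc n \<le> - K / B ^ (2 ^ Suc n)"
      using rpow[of "Suc n"] K0 by (simp add: divide_inverse mult_left_mono)
    also have "\<dots> \<le> a n" unfolding a_def using divide_right_mono[OF low[of "Suc n"], of "B ^ (2 ^ Suc n)"] Bp[of "Suc n"]
      by simp
    finally show ?thesis .
  qed
  have e0: "0 \<le> e n" for n unfolding e_def bb_def using Bp[of "Suc n"] Bp[of n] by simp
  have eh: "e n \<le> h n" for n
  proof (cases "n = 0")
    case True thus ?thesis unfolding e_def h_def bb_def by simp
  next
    case False
    have "e n = 1 / B ^ (2 ^ n)" unfolding e_def bb_def using False Bp[of n]
      by (simp add: power_mult power2_eq_square power_mult_distrib)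
    thus ?thesis using rpow[of n] False unfolding h_def by simp
  qed
  have geo: "(\<lambda>n. r ^ n) sums (1 / (1 - r))" using geometric_sums[of r] r0 r1 by simp
  have hs: "h sums (1 / (1 - r) - 1)" unfolding h_def
    using sums_diff[OF geo sums_single[of 0 "\<lambda>_. 1::real"]] by (simp cong: if_cong)
  have hval: "1 / (1 - r) - 1 \<le> 1 / B"
  proof -
    have "B^2 - 1 \<noteq> 0" using B4 by (simp add: power2_eq_square)
    hence "1 / (1 - r) - 1 = 1 / (B^2 - 1)" unfolding r_def using B
      by (simp add: field_simps)
    also have "\<dots> \<le> 1 / B"
    proof -
      have "2 * B \<le> B * B" using mult_right_mono[of 2 B B] B by simp
      hence h1: "B \<le> B^2 - 1" using B unfolding power2_eq_square by linarith
      have "0 < (B^2 - 1) * B" using h1 B by (intro mult_pos_pos) auto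
      thus ?thesis using h1 by (intro divide_left_mono) auto
    qed
    finally show ?thesis .
  qed
  have esum: "summable e" by (rule summable_comparison_test'[of h 0]) (use hs eh e0 in \<open>auto simp: sums_iff\<close>)
  have ele: "suminf e \<le> 1 / B"
    using suminf_le[OF eh esum] hs hval by (auto simp: sums_iff)
  have geoS: "summable (\<lambda>n. r ^ Suc n)" using geo by (simp add: sums_iff)
  have p0: "snd (sel 0) \<le> 0"
  proof -
    have z: "(0::real^'k) \<in> supportD B X" unfolding supportD_def by simp
    have "utility (0::real^'k) (0, 0) \<le> utility 0 (sel 0)"
      using S null z unfolding selects_def by blast
    thus ?thesis unfolding utility_def by simp
  qed
  have ar0: "aligned_rev sel 0 = snd (sel 0)"
    unfolding aligned_rev_def parallel_def by auto
  have wsum: "(\<Sum>i. 1 / B ^ (2 ^ Suc i)) \<le> 1"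
  proof -
    have le: "1 / B ^ (2 ^ Suc i) \<le> r ^ Suc i" for i using rpow .
    have sm: "summable (\<lambda>i. 1 / B ^ (2 ^ Suc i))"
      by (rule summable_comparison_test'[OF geoS, of 0]) (use le Bp in auto)
    have "(\<Sum>i. 1 / B ^ (2 ^ Suc i)) \<le> (\<Sum>i. r ^ Suc i)" by (rule suminf_le[OF le sm geoS])
    also have "\<dots> = 1 / (1 - r) - 1"
      using suminf_split_head[of "\<lambda>n. r ^ n"] geo by (simp add: sums_iff del: power_Suc)
    also have "\<dots> \<le> 1" using hval B by (smt (verit) divide_le_eq_1)
    finally show ?thesis .
  qed
  have zt: "(1 - (\<Sum>i. 1 / B ^ (2 ^ Suc i))) * aligned_rev sel 0 \<le> 0"
    using wsum p0 ar0 by (simp add: mult_nonneg_nonpos)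
  have AG: "AlignGapC X c \<le> AlignGap X"
    unfolding AlignGap_def using validC by (intro SUP_upper) auto
  have ARa: "ARevD B X sel = (\<Sum>n. ereal (a n)) + ereal ((1 - (\<Sum>i. 1 / B ^ (2 ^ Suc i))) * aligned_rev sel 0)"
    unfolding ARevD_def a_def v_def ..
  show ?thesis
  proof (cases "AlignGapC X c = \<infinity>")
    case True
    hence "AlignGap X = \<infinity>" using AG by simp
    thus ?thesis by simp
  next
    case False
    have AGc: "AlignGapC X c = (\<Sum>n. ereal (g n))" unfolding AlignGapC_def g_def ..
    have gsum: "summable g" using summable_ereal[OF g0] False AGc by simp
    have gval: "AlignGapC X c = ereal (suminf g)" using suminf_ereal[OF g0] False AGc by simp
    have asum: "summable a"
    proof (rule summable_comparison_test'[of "\<lambda>n. g n + e n + K * r ^ Suc n" 0])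
      show "summable (\<lambda>n. g n + e n + K * r ^ Suc n)"
        using gsum esum summable_mult[OF geoS, of K] by (intro summable_add) auto
      fix n show "norm (a n) \<le> g n + e n + K * r ^ Suc n"
        using aup[of n] alow[of n] g0[of n] e0[of n] K0 r0 by (simp add: abs_le_iff) (smt (verit) zero_le_power mult_nonneg_nonneg less_imp_le)
    qed
    have "suminf a \<le> suminf (\<lambda>n. g n + e n)"
      by (rule suminf_le[OF aup asum]) (use gsum esum in \<open>intro summable_add\<close>)
    also have "\<dots> = suminf g + suminf e" using suminf_add[OF gsum esum] ..
    finally have sa: "suminf a \<le> suminf g + 1 / B" using ele by linarith
    have "ARevD B X sel = ereal (suminf a + (1 - (\<Sum>i. 1 / B ^ (2 ^ Suc i))) * aligned_rev sel 0)"
      unfolding ARa suminf_ereal'[OF asum] by simp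
    also have "\<dots> \<le> ereal (suminf g + 1 / B)" using sa zt by simp
    also have "\<dots> = AlignGapC X c + ereal (1 / B)" using gval by simp
    also have "\<dots> \<le> AlignGap X + ereal (1 / B)" using AG by (simp add: add_right_mono)
    finally show ?thesis .
  qed
qed

theorem propositionC1:
  fixes X :: "nat \<Rightarrow> real^'k" and B :: real
  assumes "\<forall>i\<ge>1. X i \<noteq> 0 \<and> in_unit_cube (X i)"
    and "B \<ge> 2"
  shows "ARev_sup B X \<le> AlignGap X + ereal (1 / B)"
  unfolding ARev_sup_def
  by (rule SUP_least) (auto intro: main_bound[OF assms])

end
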